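(* For every integer $m\ge2$, $$S_m^2<S_{m+1}S_{m-1}<\Big(1+\frac{1}{m(m-1)}\Big)S_m^2.$$
   Context: $(S_n)_{n\ge0}$ is the integer sequence defined by $S_0=1$, $S_1=4$ and $(n+1)^2S_{n+1}=4(3n^2+3n+1)S_n-32n^2S_{n-1}$ for $n\ge1$; equivalently $S_n=\sum_{k=0}^n\binom nk\binom{2k}k\binom{2n-2k}{n-k}$. *)

theory Defs
  imports Complex_Main
begin

definition S :: "nat \<Rightarrow> nat" where
  "S n = (\<Sum>k\<le>n. (n choose k) * ((2*k) choose k) * ((2*n - 2*k) choose (n - k)))"

end

theory Submission
  imports Defs
begin
definition cc :: "nat \<Rightarrow> real" where "cc i = real ((2*i) choose i)"
definition BB :: "nat \<Rightarrow> nat \<Rightarrow> real" where "BB a b = real ((a+b) choose a)"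

lemma cc_fact: "cc i = fact (2*i) / (fact i * fact i)"
  unfolding cc_def by (subst binomial_fact) (auto simp: mult_2)

lemma BB_fact: "BB a b = fact (a+b) / (fact a * fact b)"
  unfolding BB_def by (subst binomial_fact) auto

lemma cc_Suc: "cc (Suc i) = 2*(2*real i+1)/(real i+1) * cc i"
proof -
  have aux: "\<And>x a g::real. x > 0 \<Longrightarrow> a > 0 \<Longrightarrow> (2*x)*(2*x-1)*g/((x*a)*(x*a)) = 2*(2*x-1)/x * (g/(a*a))"
    by (simp add: field_simps)
  have f1: "fact (2*Suc i) = (2*(real i+1))*(2*(real i+1)-1)*(fact (2*i)::real)"
    by (simp add: algebra_simps)
  moreover have f2: "(fact (Suc i)::real) = (real i+1) * fact i" by simp
  ultimately have "cc (Suc i) = (2*(real i+1))*(2*(real i+1)-1)*(fact (2*i)::real) / (((real i+1) * fact i) * ((real i+1) * fact i))"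
    by (simp only: cc_fact f1 f2)
  also have "\<dots> = 2*(2*(real i+1)-1)/(real i+1) * (fact (2*i) / (fact i * fact i))"
    by (rule aux) auto
  finally show ?thesis unfolding cc_fact by (simp add: algebra_simps)
qed

lemma BB_Suc1: "BB (Suc a) b = (real a+real b+1)/(real a+1) * BB a b"
  unfolding BB_fact by (simp add: field_simps)

lemma BB_Suc2: "BB a (Suc b) = (real a+real b+1)/(real b+1) * BB a b"
  unfolding BB_fact by (simp add: field_simps)

definition Fr :: "nat \<Rightarrow> nat \<Rightarrow> real" where
  "Fr n k = real ((n choose k) * ((2*k) choose k) * ((2*n - 2*k) choose (n - k)))"

definition Gf :: "nat \<Rightarrow> nat \<Rightarrow> real" where
  "Gf n k = - ((real k)^2 * ((real n + 1)*(2*real n - 1) - 2*real n*real k) / ((real n + 1)*(2*real n + 1 - 2*real k)) * Fr (n+1) k)"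

lemma Fr_eq: "k \<le> n \<Longrightarrow> Fr n k = BB k (n-k) * cc k * cc (n-k)"
proof -
  assume "k \<le> n"
  then have "n = k + (n-k)" "2*n-2*k = 2*(n-k)" by auto
  then show ?thesis unfolding Fr_def BB_def cc_def by (metis of_nat_mult)
qed

lemma Fr_zero: "n < k \<Longrightarrow> Fr n k = 0"
  unfolding Fr_def by simp

lemma key_generic:
  assumes n: "n = k+p+1"
  shows "(real n+1)^2 * Fr (n+1) k - 4*(3*(real n)^2+3*real n+1)*Fr n k + 32*(real n)^2*Fr (n-1) k
         = Gf n (k+1) - Gf n k"
proof -
  define X where "X = BB k p * cc k * cc p"
  define K where "K = real k"
  define Q where "Q = real p"
  have K0: "K \<ge> 0" and Q0: "Q \<ge> 0" unfolding K_def Q_def by auto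
  have e0: "Fr (n-1) k = X" unfolding X_def using n by (subst Fr_eq) auto
  have e1: "Fr n k = (K+Q+1)/(Q+1) * (2*(2*Q+1)/(Q+1)) * X"
    unfolding X_def K_def Q_def using n by (subst Fr_eq) (auto simp: BB_Suc2 cc_Suc Suc_diff_le)
  have i2: "n+1-k = Suc (Suc p)" using n by simp
  have d: "real p + 1 \<noteq> 0" "real p + 2 \<noteq> 0" "real k + 1 \<noteq> 0" "1 + real p \<noteq> 0" "2 + real p \<noteq> 0" "1 + real k \<noteq> 0" by linarith+
  have i2: "n+1-k = Suc (Suc p)" using n by simp
  have e2: "Fr (n+1) k = (K+Q+2)/(Q+2) * (K+Q+1)/(Q+1) * (2*(2*Q+3)/(Q+2)) * (2*(2*Q+1)/(Q+1)) * X"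
  proof -
    have "Fr (n+1) k = BB k (Suc (Suc p)) * cc k * cc (Suc (Suc p))"
      using Fr_eq[of k "n+1"] i2 n by simp
    also have "\<dots> = (K+Q+2)/(Q+2) * (K+Q+1)/(Q+1) * (2*(2*Q+3)/(Q+2)) * (2*(2*Q+1)/(Q+1)) * X"
      unfolding BB_Suc2 cc_Suc X_def K_def Q_def using d by (simp add: field_simps)
    finally show ?thesis .
  qed
  have i3: "n+1-(k+1) = Suc p" using n by simp
  have e3: "Fr (n+1) (k+1) = (K+Q+2)/(K+1) * (K+Q+1)/(Q+1) * (2*(2*K+1)/(K+1)) * (2*(2*Q+1)/(Q+1)) * X"
  proof -
    have "Fr (n+1) (k+1) = BB (Suc k) (Suc p) * cc (Suc k) * cc (Suc p)"
      using Fr_eq[of "k+1" "n+1"] i3 n by simp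
    also have "\<dots> = (K+Q+2)/(K+1) * (K+Q+1)/(Q+1) * (2*(2*K+1)/(K+1)) * (2*(2*Q+1)/(Q+1)) * X"
      unfolding BB_Suc1 BB_Suc2 cc_Suc X_def K_def Q_def using d by (simp add: field_simps)
    finally show ?thesis .
  qed
  have rn: "real n = K+Q+1" unfolding K_def Q_def using n by simp
  have g1: "Gf n (k+1) = -((K+1)^2 * ((K+Q+2)*(2*(K+Q+1)-1) - 2*(K+Q+1)*(K+1)) / ((K+Q+2)*(2*Q+1)) * Fr (n+1) (k+1))"
    unfolding Gf_def rn by (simp add: K_def algebra_simps)
  have g0: "Gf n k = -(K^2 * ((K+Q+2)*(2*(K+Q+1)-1) - 2*(K+Q+1)*K) / ((K+Q+2)*(2*Q+3)) * Fr (n+1) k)"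
    unfolding Gf_def rn by (simp add: K_def algebra_simps)
  have d2: "K+Q+2 \<noteq> 0" "2*Q+1 \<noteq> 0" "2*Q+3 \<noteq> 0" "Q+1 \<noteq> 0" "Q+2 \<noteq> 0" "K+1 \<noteq> 0" using K0 Q0 by linarith+
  define A where "A = Q+1"
  define Bq where "Bq = Q+2"
  define C where "C = K+1"
  define D where "D = K+Q+2"
  define H where "H = 2*Q+1"
  define J where "J = 2*Q+3"
  define M where "M = K+Q+1"
  have nz: "A \<noteq> 0" "Bq \<noteq> 0" "C \<noteq> 0" "D \<noteq> 0" "H \<noteq> 0" "J \<noteq> 0"
    using d2 unfolding A_def Bq_def C_def D_def H_def J_def by auto
  have e1': "Fr n k = M/A * (2*H/A) * X" unfolding e1 M_def A_def H_def ..
  have e2': "Fr (n+1) k = D/Bq * M/A * (2*J/Bq) * (2*H/A) * X" unfolding e2 M_def A_def H_def D_def Bq_def J_def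
    by (simp add: algebra_simps)
  have e3': "Fr (n+1) (k+1) = D/C * M/A * (2*(2*K+1)/C) * (2*H/A) * X" unfolding e3 M_def A_def H_def D_def C_def
    by (simp add: algebra_simps)
  have g1': "Gf n (k+1) = -(C^2 * (D*(2*M-1) - 2*M*C) / (D*H) * Fr (n+1) (k+1))"
    unfolding g1 D_def M_def C_def H_def by (simp add: algebra_simps)
  have g0': "Gf n k = -(K^2 * (D*(2*M-1) - 2*M*K) / (D*J) * Fr (n+1) k)"
    unfolding g0 D_def M_def J_def by (simp add: algebra_simps)
  define Z where "Z = X / (A^2*Bq^2)"
  have z0: "Fr (n-1) k = A^2*Bq^2 * Z" unfolding e0 Z_def using nz by (simp add: field_simps)
  have z1: "Fr n k = 2*M*H*Bq^2 * Z" unfolding e1' Z_def using nz by (simp add: field_simps power2_eq_square)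
  have z2: "Fr (n+1) k = 4*D*M*J*H * Z" unfolding e2' Z_def using nz by (simp add: field_simps power2_eq_square)
  have z3: "Gf n (k+1) = -((D*(2*M-1) - 2*M*C) * M * 4*(2*K+1)*Bq^2 * Z)"
    unfolding g1' e3' Z_def using nz by (simp add: field_simps power2_eq_square)
  have z4: "Gf n k = -(K^2 * (D*(2*M-1) - 2*M*K) * M * 4*H * Z)"
    unfolding g0' z2 using nz by (simp add: field_simps power2_eq_square)
  have rn': "real n = M" unfolding rn M_def ..
  show ?thesis
    unfolding z0 z1 z2 z3 z4 rn' A_def Bq_def C_def D_def H_def J_def M_def
    by (simp add: algebra_simps power2_eq_square)
qed

lemma cc0: "cc 0 = 1" unfolding cc_def by simp
lemma cc1: "cc 1 = 2" unfolding cc_def by simp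
lemma BB0: "BB a 0 = 1" unfolding BB_def by simp

lemma Fr_diag: "Fr n n = cc n"
  using Fr_eq[of n n] by (simp add: cc0 BB0)

lemma Fr_sub: "Fr (Suc n) n = 2*(real n+1) * cc n"
proof -
  have "Fr (Suc n) n = BB n (Suc 0) * cc n * cc (Suc 0)" using Fr_eq[of n "Suc n"] by simp
  then show ?thesis by (simp add: BB_Suc2 BB0 cc1[simplified])
qed

lemma key_n:
  assumes "n \<ge> 1"
  shows "(real n+1)^2 * Fr (n+1) n - 4*(3*(real n)^2+3*real n+1)*Fr n n + 32*(real n)^2*Fr (n-1) n
         = Gf n (n+1) - Gf n n"
proof -
  have a: "Fr (n-1) n = 0" using assms by (simp add: Fr_zero)
  have b: "Gf n (n+1) = -((real n+1)^2 * (2*(2*real n+1)/(real n+1) * cc n))"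
    unfolding Gf_def using Fr_diag[of "n+1"] cc_Suc[of n] by (simp add: field_simps power2_eq_square)
  have c: "Gf n n = - (2*(real n)^2*(real n - 1) * cc n)"
    unfolding Gf_def using Fr_sub[of n] by (simp add: field_simps power2_eq_square)
  show ?thesis unfolding a b c using Fr_sub[of n] Fr_diag[of n]
    by (simp add: field_simps power2_eq_square)
qed

lemma key_n1:
  shows "(real n+1)^2 * Fr (n+1) (n+1) - 4*(3*(real n)^2+3*real n+1)*Fr n (n+1) + 32*(real n)^2*Fr (n-1) (n+1)
         = Gf n (n+2) - Gf n (n+1)"
proof -
  have a: "Fr (n-1) (n+1) = 0" "Fr n (n+1) = 0" "Fr (n+1) (n+2) = 0" by (simp_all add: Fr_zero)
  have b: "Gf n (n+1) = -((real n+1)^2 * Fr (n+1) (n+1))"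
    unfolding Gf_def by (simp add: field_simps power2_eq_square)
  have c: "Gf n (n+2) = 0" unfolding Gf_def a by simp
  show ?thesis unfolding a b c by simp
qed

lemma key:
  assumes "n \<ge> 1" "k \<le> n+1"
  shows "(real n+1)^2 * Fr (n+1) k - 4*(3*(real n)^2+3*real n+1)*Fr n k + 32*(real n)^2*Fr (n-1) k
         = Gf n (k+1) - Gf n k"
proof -
  consider "k < n" | "k = n" | "k = n+1" using assms by linarith
  then show ?thesis
  proof cases
    case 1
    then show ?thesis using key_generic[of n k "n-k-1"] by simp
  next
    case 2
    then show ?thesis using key_n assms by simp
  next
    case 3
    then show ?thesis using key_n1[of n] by (simp add: numeral_2_eq_2)
  qed
qed

lemma S_sum: "m < N \<Longrightarrow> real (S m) = (\<Sum>k<N. Fr m k)"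
proof -
  assume "m < N"
  have "real (S m) = (\<Sum>k\<le>m. Fr m k)" unfolding S_def Fr_def by simp
  also have "\<dots> = (\<Sum>k<N. Fr m k)"
    by (rule sum.mono_neutral_left) (use \<open>m < N\<close> in \<open>auto simp: Fr_zero\<close>)
  finally show ?thesis .
qed

lemma S_rec:
  assumes "n \<ge> 1"
  shows "(real n+1)^2 * real (S (n+1)) = 4*(3*(real n)^2+3*real n+1) * real (S n) - 32*(real n)^2 * real (S (n-1))"
proof -
  have "(\<Sum>k<n+2. (real n+1)^2 * Fr (n+1) k - 4*(3*(real n)^2+3*real n+1)*Fr n k + 32*(real n)^2*Fr (n-1) k)
      = (\<Sum>k<n+2. Gf n (Suc k) - Gf n k)"
    by (rule sum.cong) (use assms key in auto)
  also have "\<dots> = Gf n (n+2) - Gf n 0" by (rule sum_lessThan_telescope)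
  also have "\<dots> = 0" unfolding Gf_def by (simp add: Fr_zero)
  finally have "(\<Sum>k<n+2. (real n+1)^2 * Fr (n+1) k - 4*(3*(real n)^2+3*real n+1)*Fr n k + 32*(real n)^2*Fr (n-1) k) = 0" .
  moreover have SS: "real (S (n+1)) = (\<Sum>k<n+2. Fr (n+1) k)" "real (S n) = (\<Sum>k<n+2. Fr n k)"
     "real (S (n-1)) = (\<Sum>k<n+2. Fr (n-1) k)" by (rule S_sum; use assms in simp)+
  moreover have "(\<Sum>k<n+2. (real n+1)^2 * Fr (n+1) k - 4*(3*(real n)^2+3*real n+1)*Fr n k + 32*(real n)^2*Fr (n-1) k)
     = (real n+1)^2 * (\<Sum>k<n+2. Fr (n+1) k) - 4*(3*(real n)^2+3*real n+1)*(\<Sum>k<n+2. Fr n k) + 32*(real n)^2*(\<Sum>k<n+2. Fr (n-1) k)"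
    by (simp only: sum.distrib sum_subtractf sum_distrib_left)
  ultimately show ?thesis unfolding SS by linarith
qed


definition ua :: "real \<Rightarrow> real" where "ua x = 8*x^2+24*x+22"
definition ub :: "real \<Rightarrow> real" where "ub x = (x+2)^2"
definition ll :: "real \<Rightarrow> real" where "ll x = 8*x^4 - 14*(x+1)"
definition le :: "real \<Rightarrow> real" where "le x = x^3*(x+1)"
definition cf :: "real \<Rightarrow> real" where "cf x = 4*(3*(x+1)^2+3*(x+1)+1)"
definition df :: "real \<Rightarrow> real" where "df x = 32*(x+1)^2"
definition Ac :: "real \<Rightarrow> real" where "Ac x = (x+2)^2*(x^2+x+1)"
definition Bc :: "real \<Rightarrow> real" where "Bc x = x*(x+1)*cf x"
definition Cc :: "real \<Rightarrow> real" where "Cc x = x*(x+1)*df x"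

lemma cU:
  fixes x :: real assumes x: "x \<ge> 1"
  shows "(cf x * ua x - df x * ub x) * ub (x+1) \<le> ua x * ua (x+1) * (x+2)^2"
proof -
  define t where "t = x - 1"
  have t: "t \<ge> 0" using x unfolding t_def by simp
  have eq: "ua x * ua (x+1) * (x+2)^2 - (cf x * ua x - df x * ub x) * ub (x+1) = 2340 + t*(3608 + t*(2140 + t*(568 + t*(56))))"
    unfolding t_def ua_def ub_def ll_def le_def cf_def df_def Ac_def Bc_def Cc_def by algebra
  have "0 \<le> 2340 + t*(3608 + t*(2140 + t*(568 + t*(56))))" using t by (intro add_nonneg_nonneg mult_nonneg_nonneg; simp)
  then show ?thesis using eq by linarith
qed

lemma cL:
  fixes x :: real assumes x: "x \<ge> 8"
  shows "ll x * ll (x+1) * (x+2)^2 \<le> (cf x * ll x - df x * le x) * le (x+1)"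
proof -
  define t where "t = x - 8"
  have t: "t \<ge> 0" using x unfolding t_def by simp
  have eq: "(cf x * ll x - df x * le x) * le (x+1) - ll x * ll (x+1) * (x+2)^2 = 3200080 + t*(17886328 + t*(10751232 + t*(2816060 + t*(397820 + t*(31736 + t*(1352 + t*(24)))))))"
    unfolding t_def ua_def ub_def ll_def le_def cf_def df_def Ac_def Bc_def Cc_def by algebra
  have "0 \<le> 3200080 + t*(17886328 + t*(10751232 + t*(2816060 + t*(397820 + t*(31736 + t*(1352 + t*(24)))))))" using t by (intro add_nonneg_nonneg mult_nonneg_nonneg; simp)
  then show ?thesis using eq by linarith
qed

lemma cPL:
  fixes x :: real assumes x: "x \<ge> 8"
  shows "0 < cf x * ll x * le x - df x * (le x)^2 - (x+2)^2 * (ll x)^2"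
proof -
  define t where "t = x - 8"
  have t: "t \<ge> 0" using x unfolding t_def by simp
  have eq: "cf x * ll x * le x - df x * (le x)^2 - (x+2)^2 * (ll x)^2 = 1461466736 + t*(1404460944 + t*(590475532 + t*(141893728 + t*(21320372 + t*(2051424 + t*(123448 + t*(4248 + t*(64))))))))"
    unfolding t_def ua_def ub_def ll_def le_def cf_def df_def Ac_def Bc_def Cc_def by algebra
  have "0 < 1461466736 + t*(1404460944 + t*(590475532 + t*(141893728 + t*(21320372 + t*(2051424 + t*(123448 + t*(4248 + t*(64))))))))" using t by (intro add_pos_nonneg mult_nonneg_nonneg; simp)
  then show ?thesis using eq by linarith
qed

lemma cPU:
  fixes x :: real assumes x: "x \<ge> 8"
  shows "0 < cf x * ua x * ub x - df x * (ub x)^2 - (x+2)^2 * (ua x)^2"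
proof -
  define t where "t = x - 8"
  have t: "t \<ge> 0" using x unfolding t_def by simp
  have eq: "cf x * ua x * ub x - df x * (ub x)^2 - (x+2)^2 * (ua x)^2 = 70800 + t*(29360 + t*(4548 + t*(312 + t*(8))))"
    unfolding t_def ua_def ub_def ll_def le_def cf_def df_def Ac_def Bc_def Cc_def by algebra
  have "0 < 70800 + t*(29360 + t*(4548 + t*(312 + t*(8))))" using t by (intro add_pos_nonneg mult_nonneg_nonneg; simp)
  then show ?thesis using eq by linarith
qed

lemma cQL:
  fixes x :: real assumes x: "x \<ge> 8"
  shows "0 < Ac x * (ll x)^2 - Bc x * ll x * le x + Cc x * (le x)^2"
proof -
  define t where "t = x - 8"
  have t: "t \<ge> 0" using x unfolding t_def by simp
  have eq: "Ac x * (ll x)^2 - Bc x * ll x * le x + Cc x * (le x)^2 = 1324411408 + t*(2213788800 + t*(1440875476 + t*(509391036 + t*(110682936 + t*(15543724 + t*(1422540 + t*(82248 + t*(2736 + t*(40)))))))))"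
    unfolding t_def ua_def ub_def ll_def le_def cf_def df_def Ac_def Bc_def Cc_def by algebra
  have "0 < 1324411408 + t*(2213788800 + t*(1440875476 + t*(509391036 + t*(110682936 + t*(15543724 + t*(1422540 + t*(82248 + t*(2736 + t*(40)))))))))" using t by (intro add_pos_nonneg mult_nonneg_nonneg; simp)
  then show ?thesis using eq by linarith
qed

lemma cV:
  fixes x :: real assumes x: "x \<ge> 8"
  shows "0 \<le> 2 * Ac x * ll x - Bc x * le x"
proof -
  define t where "t = x - 8"
  have t: "t \<ge> 0" using x unfolding t_def by simp
  have eq: "2 * Ac x * ll x - Bc x * le x = 116928016 + t*(109910768 + t*(45069156 + t*(10535416 + t*(1536188 + t*(143112 + t*(8320 + t*(276 + t*(4))))))))"
    unfolding t_def ua_def ub_def ll_def le_def cf_def df_def Ac_def Bc_def Cc_def by algebra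
  have "0 \<le> 116928016 + t*(109910768 + t*(45069156 + t*(10535416 + t*(1536188 + t*(143112 + t*(8320 + t*(276 + t*(4))))))))" using t by (intro add_nonneg_nonneg mult_nonneg_nonneg; simp)
  then show ?thesis using eq by linarith
qed

lemma cLpos:
  fixes x :: real assumes x: "x \<ge> 8"
  shows "0 < ll x"
proof -
  define t where "t = x - 8"
  have t: "t \<ge> 0" using x unfolding t_def by simp
  have eq: "ll x = 32642 + t*(16370 + t*(3072 + t*(256 + t*(8))))"
    unfolding t_def ua_def ub_def ll_def le_def cf_def df_def Ac_def Bc_def Cc_def by algebra
  have "0 < 32642 + t*(16370 + t*(3072 + t*(256 + t*(8))))" using t by (intro add_pos_nonneg mult_nonneg_nonneg; simp)
  then show ?thesis using eq by linarith
qed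


lemma S_pos: "0 < S n"
  unfolding S_def by (rule sum_pos2[where i=0]) auto

lemma S_rec2: "(real n+2)^2 * real (S (n+2)) = cf (real n) * real (S (n+1)) - df (real n) * real (S n)"
  using S_rec[of "n+1"] unfolding cf_def df_def by (simp add: algebra_simps)

lemma S0: "S 0 = 1" unfolding S_def by simp
lemma S1: "S 1 = 4" unfolding S_def by (simp add: numeral_2_eq_2)

lemma Svals: "real (S 2) = 20" "real (S 3) = 112" "real (S 4) = 676" "real (S 5) = 4304"
  "real (S 6) = 28496" "real (S 7) = 194240" "real (S 8) = 1353508" "real (S 9) = 9593104"
proof -
  have r: "\<And>n. (real n+2)^2 * real (S (n+2)) = cf (real n) * real (S (n+1)) - df (real n) * real (S n)"
    by (rule S_rec2)
  note cd = cf_def df_def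
  show a2: "real (S 2) = 20" using r[of 0] S0 S1 unfolding cd by (simp add: eval_nat_numeral)
  show a3: "real (S 3) = 112" using r[of 1] S1 a2 unfolding cd by (simp add: eval_nat_numeral)
  show a4: "real (S 4) = 676" using r[of 2] a2 a3 unfolding cd by simp
  show a5: "real (S 5) = 4304" using r[of 3] a3 a4 unfolding cd by simp
  show a6: "real (S 6) = 28496" using r[of 4] a4 a5 unfolding cd by simp
  show a7: "real (S 7) = 194240" using r[of 5] a5 a6 unfolding cd by simp
  show a8: "real (S 8) = 1353508" using r[of 6] a6 a7 unfolding cd by simp
  show a9: "real (S 9) = 9593104" using r[of 7] a7 a8 unfolding cd by simp
qed

lemma upper: "n \<ge> 1 \<Longrightarrow> ub (real n) * real (S (n+1)) \<le> ua (real n) * real (S n)"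
proof (induction n rule: dec_induct)
  case base
  show ?case using Svals(1) S1 unfolding ua_def ub_def by (simp add: numeral_2_eq_2)
next
  case (step n)
  define x where "x = real n"
  have x1: "x \<ge> 1" using step unfolding x_def by simp
  define a where "a = real (S n)"
  define b where "b = real (S (n+1))"
  define c where "c = real (S (n+2))"
  have b0: "b \<ge> 0" unfolding b_def by simp
  have hyp: "ub x * b \<le> ua x * a" using step.IH unfolding x_def a_def b_def .
  have rec: "(x+2)^2 * c = cf x * b - df x * a" using S_rec2[of n] unfolding x_def a_def b_def c_def .
  have "x^2 \<ge> 0" by simp
  then have "ua x > 0" using x1 unfolding ua_def by linarith
  then have uapos: "ua x > 0" "ub (x+1) \<ge> 0" "df x \<ge> 0" using x1 unfolding ub_def df_def by auto
  have h1: "df x * (ub x * b) \<le> df x * (ua x * a)" using hyp uapos by (intro mult_left_mono) auto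
  have "ua x * ((x+2)^2 * c) = cf x * (ua x * b) - df x * (ua x * a)" unfolding rec by (simp add: algebra_simps)
  also have "\<dots> \<le> cf x * (ua x * b) - df x * (ub x * b)" using h1 by linarith
  also have "\<dots> = (cf x * ua x - df x * ub x) * b" by (simp add: algebra_simps)
  finally have h2: "ua x * ((x+2)^2 * c) \<le> (cf x * ua x - df x * ub x) * b" .
  have "(ua x * (x+2)^2) * (ub (x+1) * c) = ub (x+1) * (ua x * ((x+2)^2 * c))" by (simp add: algebra_simps)
  also have "\<dots> \<le> ub (x+1) * ((cf x * ua x - df x * ub x) * b)" using h2 uapos by (intro mult_left_mono) auto
  also have "\<dots> = ((cf x * ua x - df x * ub x) * ub (x+1)) * b" by (simp add: algebra_simps)
  also have "\<dots> \<le> (ua x * ua (x+1) * (x+2)^2) * b" using cU[OF x1] b0 by (intro mult_right_mono) auto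
  also have "\<dots> = (ua x * (x+2)^2) * (ua (x+1) * b)" by (simp add: algebra_simps)
  finally have "(ua x * (x+2)^2) * (ub (x+1) * c) \<le> (ua x * (x+2)^2) * (ua (x+1) * b)" .
  moreover have "ua x * (x+2)^2 > 0" using uapos x1 by simp
  ultimately have "ub (x+1) * c \<le> ua (x+1) * b" by (rule mult_left_le_imp_le)
  then show ?case unfolding x_def b_def c_def by (simp add: add.commute)
qed

lemma lower: "n \<ge> 8 \<Longrightarrow> ll (real n) * real (S n) \<le> le (real n) * real (S (n+1))"
proof (induction n rule: dec_induct)
  case base
  show ?case using Svals unfolding ll_def le_def by simp
next
  case (step n)
  define x where "x = real n"
  have x8: "x \<ge> 8" using step unfolding x_def by simp
  define a where "a = real (S n)"
  define b where "b = real (S (n+1))"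
  define c where "c = real (S (n+2))"
  have b0: "b \<ge> 0" unfolding b_def by simp
  have hyp: "ll x * a \<le> le x * b" using step.IH unfolding x_def a_def b_def .
  have rec: "(x+2)^2 * c = cf x * b - df x * a" using S_rec2[of n] unfolding x_def a_def b_def c_def .
  have pos: "ll x > 0" "le (x+1) \<ge> 0" "df x \<ge> 0" using x8 cLpos[OF x8] unfolding le_def df_def by auto
  have h1: "df x * (ll x * a) \<le> df x * (le x * b)" using hyp pos by (intro mult_left_mono) auto
  have "ll x * ((x+2)^2 * c) = cf x * (ll x * b) - df x * (ll x * a)" unfolding rec by (simp add: algebra_simps)
  also have "\<dots> \<ge> cf x * (ll x * b) - df x * (le x * b)" using h1 by linarith
  also have "cf x * (ll x * b) - df x * (le x * b) = (cf x * ll x - df x * le x) * b" by (simp add: algebra_simps)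
  finally have h2: "(cf x * ll x - df x * le x) * b \<le> ll x * ((x+2)^2 * c)" .
  have "(ll x * (x+2)^2) * (ll (x+1) * b) = (ll x * ll (x+1) * (x+2)^2) * b" by (simp add: algebra_simps)
  also have "\<dots> \<le> ((cf x * ll x - df x * le x) * le (x+1)) * b" using cL[OF x8] b0 by (intro mult_right_mono) auto
  also have "\<dots> = le (x+1) * ((cf x * ll x - df x * le x) * b)" by (simp add: algebra_simps)
  also have "\<dots> \<le> le (x+1) * (ll x * ((x+2)^2 * c))" using h2 pos by (intro mult_left_mono) auto
  also have "\<dots> = (ll x * (x+2)^2) * (le (x+1) * c)" by (simp add: algebra_simps)
  finally have "(ll x * (x+2)^2) * (ll (x+1) * b) \<le> (ll x * (x+2)^2) * (le (x+1) * c)" .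
  moreover have "ll x * (x+2)^2 > 0" using pos x8 by simp
  ultimately have "ll (x+1) * b \<le> le (x+1) * c" by (rule mult_left_le_imp_le)
  then show ?case unfolding x_def b_def c_def by (simp add: add.commute)
qed


lemma big_case:
  fixes n :: nat assumes n8: "n \<ge> 8"
  shows "real (S (n+1)) ^ 2 < real (S (n+2)) * real (S n) \<and>
         real (S (n+2)) * real (S n) < (1 + 1 / ((real n + 1) * real n)) * real (S (n+1)) ^ 2"
proof -
  define X where "X = real n"
  have X8: "X \<ge> 8" using n8 unfolding X_def by simp
  define a where "a = real (S n)"
  define b where "b = real (S (n+1))"
  define c where "c = real (S (n+2))"
  have a0: "a > 0" unfolding a_def using S_pos[of n] by simp
  have up: "ub X * b \<le> ua X * a" using upper[of n] n8 unfolding X_def a_def b_def by simp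
  have lo: "ll X * a \<le> le X * b" using lower[of n] n8 unfolding X_def a_def b_def by simp
  have rec: "(X+2)^2 * c = cf X * b - df X * a" using S_rec2[of n] unfolding X_def a_def b_def c_def .
  have lepos: "le X > 0" and ubpos: "ub X > 0" using X8 unfolding le_def ub_def by auto
  define r where "r = b / a"
  define L where "L = ll X / le X"
  define U where "U = ua X / ub X"
  have br: "b = r * a" unfolding r_def using a0 by simp
  have hL: "L \<le> r" unfolding L_def r_def using lo a0 lepos by (simp add: divide_simps mult.commute)
  have hU: "r \<le> U" unfolding U_def r_def using up a0 ubpos by (simp add: divide_simps mult.commute)
  define P where "P = (\<lambda>y. cf X * y - df X - (X+2)^2 * y^2)"
  have PL: "P L > 0"
  proof -
    have "P L = (cf X * ll X * le X - df X * (le X)^2 - (X+2)^2 * (ll X)^2) / (le X)^2"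
      unfolding P_def L_def using lepos by (simp add: field_simps power2_eq_square)
    then show ?thesis using cPL[OF X8] lepos by simp
  qed
  have PU: "P U > 0"
  proof -
    have "P U = (cf X * ua X * ub X - df X * (ub X)^2 - (X+2)^2 * (ua X)^2) / (ub X)^2"
      unfolding P_def U_def using ubpos by (simp add: field_simps power2_eq_square)
    then show ?thesis using cPU[OF X8] ubpos by simp
  qed
  have Pr: "P r > 0"
  proof (cases "L = U")
    case True
    then have "r = L" using hL hU by simp
    then show ?thesis using PL by simp
  next
    case False
    then have UL: "U - L > 0" using hL hU by simp
    have id: "P r * (U - L) = (U - r) * P L + (r - L) * P U + (X+2)^2 * ((r - L) * (U - r)) * (U - L)"
      unfolding P_def by (simp add: algebra_simps power2_eq_square)
    define mn where "mn = min (P L) (P U)"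
    have mn: "mn > 0" "mn \<le> P L" "mn \<le> P U" unfolding mn_def using PL PU by auto
    have t1: "(U - r) * mn \<le> (U - r) * P L" using hU mn by (intro mult_left_mono) auto
    have t2: "(r - L) * mn \<le> (r - L) * P U" using hL mn by (intro mult_left_mono) auto
    have t3: "0 \<le> (X+2)^2 * ((r - L) * (U - r)) * (U - L)" using hL hU UL by simp
    have "0 < (U - L) * mn" using UL mn by simp
    also have "(U - L) * mn = (U - r) * mn + (r - L) * mn" by (simp add: algebra_simps)
    finally have "0 < P r * (U - L)" unfolding id using t1 t2 t3 by linarith
    then show ?thesis using UL by (simp add: zero_less_mult_iff)
  qed
  have A: "b^2 < c * a"
  proof -
    have "0 < P r * a^2" using Pr a0 by simp
    also have "P r * a^2 = cf X * b * a - df X * a^2 - (X+2)^2 * b^2"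
      unfolding P_def br by (simp add: algebra_simps power2_eq_square)
    also have "\<dots> = (X+2)^2 * (c * a) - (X+2)^2 * b^2"
    proof -
      have ra: "(X+2)^2 * c * a = cf X * b * a - df X * a * a" using arg_cong[OF rec, of "\<lambda>t. t*a"] by (simp add: algebra_simps)
      show ?thesis using ra by (simp add: algebra_simps power2_eq_square)
    qed
    finally have "(X+2)^2 * b^2 < (X+2)^2 * (c * a)" by simp
    then show ?thesis using X8 by (simp add: mult_less_cancel_left)
  qed
  define Qf where "Qf = (\<lambda>y. Ac X * y^2 - Bc X * y + Cc X)"
  have QL: "Qf L > 0"
  proof -
    have "Qf L = (Ac X * (ll X)^2 - Bc X * ll X * le X + Cc X * (le X)^2) / (le X)^2"
      unfolding Qf_def L_def using lepos by (simp add: field_simps power2_eq_square)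
    then show ?thesis using cQL[OF X8] lepos by simp
  qed
  have V: "2 * Ac X * L - Bc X \<ge> 0"
  proof -
    have "2 * Ac X * L - Bc X = (2 * Ac X * ll X - Bc X * le X) / le X"
      unfolding L_def using lepos by (simp add: field_simps)
    then show ?thesis using cV[OF X8] lepos by simp
  qed
  have Ac0: "Ac X \<ge> 0" unfolding Ac_def using X8 by simp
  have Qr: "Qf r > 0"
  proof -
    have id: "Qf r - Qf L = (r - L) * (Ac X * (r + L) - Bc X)" unfolding Qf_def by (simp add: algebra_simps power2_eq_square)
    have "Ac X * (r + L) - Bc X \<ge> 2 * Ac X * L - Bc X"
    proof -
      have "Ac X * L \<le> Ac X * r" using hL Ac0 by (intro mult_left_mono) auto
      then show ?thesis by (simp add: algebra_simps)
    qed
    then have "Ac X * (r + L) - Bc X \<ge> 0" using V by linarith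
    then have "(r - L) * (Ac X * (r + L) - Bc X) \<ge> 0" using hL by simp
    then show ?thesis using id QL by linarith
  qed
  define w where "w = (X + 1) * X"
  have w0: "w > 0" unfolding w_def using X8 by simp
  have B: "c * a < (1 + 1 / w) * b^2"
  proof -
    have "0 < Qf r * a^2" using Qr a0 by simp
    also have "Qf r * a^2 = Ac X * b^2 - Bc X * b * a + Cc X * a^2"
      unfolding Qf_def br by (simp add: algebra_simps power2_eq_square)
    also have "\<dots> = (X+2)^2 * (w + 1) * b^2 - w * ((cf X * b - df X * a) * a)"
      unfolding Ac_def Bc_def Cc_def w_def by (simp add: algebra_simps power2_eq_square)
    also have "\<dots> = (X+2)^2 * ((w + 1) * b^2 - w * (c * a))" unfolding rec[symmetric] by (simp add: algebra_simps)
    finally have "w * (c * a) < (w + 1) * b^2" using X8 by (simp add: zero_less_mult_iff)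
    then have "c * a < (w + 1) * b^2 / w" using w0 by (simp add: field_simps)
    also have "(w + 1) * b^2 / w = (1 + 1 / w) * b^2" using w0 by (simp add: field_simps)
    finally show ?thesis .
  qed
  show ?thesis using A B unfolding a_def b_def c_def w_def X_def by simp
qed

theorem theorem4p1:
  fixes m :: nat
  assumes "m \<ge> 2"
  shows "real (S m) ^ 2 < real (S (m+1)) * real (S (m-1)) \<and>
         real (S (m+1)) * real (S (m-1)) < (1 + 1 / (real m * (real m - 1))) * real (S m) ^ 2"
proof (cases "m \<ge> 9")
  case True
  define n where "n = m - 1"
  have m: "m = n + 1" and n8: "n \<ge> 8" using True unfolding n_def by auto
  have "m + 1 = n + 2" "m - 1 = n" "real m = real n + 1" "real m - 1 = real n" using m by auto
  then show ?thesis using big_case[OF n8] m by (simp add: add.commute)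
next
  case False
  then have "m = 2 \<or> m = 3 \<or> m = 4 \<or> m = 5 \<or> m = 6 \<or> m = 7 \<or> m = 8" using assms by linarith
  then show ?thesis using Svals S1 by (elim disjE) simp_all
qed

end
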